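(* Let $\Phi:[a,b]\to\mathbb{C}$ be continuous and nowhere zero, let $x_0\in[a,b]$, and let $X^{(k)}=X^{(k)}(x_0,x)$, $\widetilde X^{(k)}=\widetilde X^{(k)}(x_0,x)$ be the $\Phi$-power functions defined below. Then for every finite even $n\ge 2$ and every $x\in[a,b]$, $$\sum_{k=0}^n (-1)^k\binom{n}{k}X^{(k)}(x_0,x)\,\widetilde X^{(n-k)}(x_0,x)=0,$$ equivalently $\widetilde X^{(n)}=\sum_{k=1}^n(-1)^{k+1}\binom{n}{k}X^{(k)}\widetilde X^{(n-k)}$.
   Context: For $x_0,x\in[a,b]$ the $\Phi$-power functions are defined recursively by $X^{(0)}(x_0,x)\equiv 1$, $\widetilde X^{(0)}(x_0,x)\equiv 1$ and, for $n\ge 1$, $$X^{(n)}(x_0,x)=n\int_{x_0}^x X^{(n-1)}(x_0,\xi)\,\big(\Phi(\xi)\big)^{(-1)^n}\,d\xi,\qquad \widetilde X^{(n)}(x_0,x)=n\int_{x_0}^x \widetilde X^{(n-1)}(x_0,\xi)\,\Big(\frac{1}{\Phi(\xi)}\Big)^{(-1)^n}\,d\xi.$$ *)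

theory Defs
  imports "HOL-Analysis.Analysis"
begin

definition oint :: "real \<Rightarrow> real \<Rightarrow> (real \<Rightarrow> complex) \<Rightarrow> complex" where
  "oint s t f = (if s \<le> t then integral {s..t} f else - integral {t..s} f)"

fun phi_pow :: "(real \<Rightarrow> complex) \<Rightarrow> real \<Rightarrow> nat \<Rightarrow> real \<Rightarrow> complex" where
  "phi_pow \<Phi> x0 0 x = 1"
| "phi_pow \<Phi> x0 (Suc n) x =
     of_nat (Suc n) * oint x0 x (\<lambda>\<xi>. phi_pow \<Phi> x0 n \<xi> *
        (if even (Suc n) then \<Phi> \<xi> else inverse (\<Phi> \<xi>)))"

definition phi_pow_tilde :: "(real \<Rightarrow> complex) \<Rightarrow> real \<Rightarrow> nat \<Rightarrow> real \<Rightarrow> complex" where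
  "phi_pow_tilde \<Phi> x0 n x = phi_pow (\<lambda>\<xi>. inverse (\<Phi> \<xi>)) x0 n x"

end

theory Submission
  imports Defs
begin

lemma oint_eq:
  fixes g :: "real \<Rightarrow> complex"
  assumes "continuous_on {a..b} g" "x0 \<in> {a..b}" "x \<in> {a..b}"
  shows "oint x0 x g = integral {a..x} g - integral {a..x0} g"
proof -
  have I: "g integrable_on {a..b}" using assms(1) by (rule integrable_continuous_interval)
  have ax0: "a \<le> x0" "x0 \<le> b" "a \<le> x" "x \<le> b" using assms(2,3) by auto
  show ?thesis
  proof (cases "x0 \<le> x")
    case True
    have sub: "{a..x} \<subseteq> {a..b}" using ax0 by simp
    have "g integrable_on {a..x}"
      by (rule integrable_subinterval_real[OF I sub])
    then have "integral {a..x0} g + integral {x0..x} g = integral {a..x} g"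
      by (rule Henstock_Kurzweil_Integration.integral_combine[OF ax0(1) True])
    then show ?thesis using True by (simp add: oint_def algebra_simps)
  next
    case False
    then have F: "x \<le> x0" by simp
    have sub: "{a..x0} \<subseteq> {a..b}" using ax0 by simp
    have "g integrable_on {a..x0}"
      by (rule integrable_subinterval_real[OF I sub])
    then have "integral {a..x} g + integral {x..x0} g = integral {a..x0} g"
      by (rule Henstock_Kurzweil_Integration.integral_combine[OF ax0(3) F])
    then show ?thesis using False by (simp add: oint_def algebra_simps)
  qed
qed

lemma oint_deriv:
  fixes g :: "real \<Rightarrow> complex"
  assumes "continuous_on {a..b} g" "x0 \<in> {a..b}" "x \<in> {a..b}"
  shows "((\<lambda>u. oint x0 u g) has_vector_derivative g x) (at x within {a..b})"
proof -
  have "((\<lambda>u. integral {a..u} g - integral {a..x0} g) has_vector_derivative g x - 0) (at x within {a..b})"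
    by (intro has_vector_derivative_diff integral_has_vector_derivative assms has_vector_derivative_const)
  then have d: "((\<lambda>u. integral {a..u} g - integral {a..x0} g) has_vector_derivative g x) (at x within {a..b})"
    by simp
  have e: "\<And>u. u \<in> {a..b} \<Longrightarrow> oint x0 u g = integral {a..u} g - integral {a..x0} g"
    by (rule oint_eq[OF assms(1,2)])
  show ?thesis
    by (rule has_vector_derivative_transform[OF assms(3) e d])
qed

definition wt :: "(real \<Rightarrow> complex) \<Rightarrow> nat \<Rightarrow> real \<Rightarrow> complex" where
  "wt \<psi> k t = (if even k then \<psi> t else inverse (\<psi> t))"

lemma wt_cont:
  assumes c: "continuous_on {a..b} \<psi>" and nz: "\<forall>t\<in>{a..b}. \<psi> t \<noteq> 0"
  shows "continuous_on {a..b} (wt \<psi> k)"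
  using c nz by (cases "even k") (auto simp: wt_def intro!: continuous_intros)

lemma phi_pow_step:
  fixes \<psi> :: "real \<Rightarrow> complex"
  assumes c: "continuous_on {a..b} \<psi>" and nz: "\<forall>t\<in>{a..b}. \<psi> t \<noteq> 0" and x0: "x0 \<in> {a..b}"
    and ck: "continuous_on {a..b} (phi_pow \<psi> x0 k)" and x: "x \<in> {a..b}"
  shows "(phi_pow \<psi> x0 (Suc k) has_vector_derivative
        of_nat (Suc k) * (phi_pow \<psi> x0 k x * wt \<psi> (Suc k) x)) (at x within {a..b})"
proof -
  have e: "phi_pow \<psi> x0 (Suc k) = (\<lambda>x. of_nat (Suc k) * oint x0 x (\<lambda>t. phi_pow \<psi> x0 k t * wt \<psi> (Suc k) t))"
    by (rule ext) (simp add: wt_def)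
  have cw: "continuous_on {a..b} (\<lambda>t. phi_pow \<psi> x0 k t * wt \<psi> (Suc k) t)"
    using ck wt_cont[OF c nz, of "Suc k"] by (intro continuous_intros)
  show ?thesis unfolding e
    by (intro has_vector_derivative_mult_right oint_deriv[OF cw x0 x])
qed

lemma phi_pow_cont:
  fixes \<psi> :: "real \<Rightarrow> complex"
  assumes c: "continuous_on {a..b} \<psi>" and nz: "\<forall>t\<in>{a..b}. \<psi> t \<noteq> 0" and x0: "x0 \<in> {a..b}"
  shows "continuous_on {a..b} (phi_pow \<psi> x0 k)"
proof (induction k)
  case 0
  show ?case by simp
next
  case (Suc k)
  show ?case unfolding continuous_on_eq_continuous_within
  proof
    fix x assume "x \<in> {a..b}"
    from has_vector_derivative_continuous[OF phi_pow_step[OF c nz x0 Suc this]]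
    show "continuous (at x within {a..b}) (phi_pow \<psi> x0 (Suc k))" .
  qed
qed

lemma phi_pow_at0:
  "phi_pow \<psi> x0 (Suc k) x0 = 0"
  by (simp add: oint_def)

lemma phi_pow_deriv:
  fixes \<psi> :: "real \<Rightarrow> complex"
  assumes c: "continuous_on {a..b} \<psi>" and nz: "\<forall>t\<in>{a..b}. \<psi> t \<noteq> 0" and x0: "x0 \<in> {a..b}"
    and x: "x \<in> {a..b}"
  shows "(phi_pow \<psi> x0 k has_vector_derivative
     (if k = 0 then 0 else of_nat k * (phi_pow \<psi> x0 (k - 1) x * wt \<psi> k x))) (at x within {a..b})"
proof (cases k)
  case 0
  have "phi_pow \<psi> x0 0 = (\<lambda>_. 1)" by (rule ext) simp
  then show ?thesis using 0 by simp
next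
  case (Suc j)
  then show ?thesis using phi_pow_step[OF c nz x0 phi_pow_cont[OF c nz x0] x, of j] by simp
qed

lemma binom_id: "Suc j * (Suc m choose Suc j) = (Suc m - j) * (Suc m choose j)"
  using Suc_times_binomial[of j m] binomial_absorb_comp[of "Suc m" j] by simp

lemma alg:
  fixes X Y wX wY :: "nat \<Rightarrow> complex"
  assumes n: "n = Suc m" and w: "\<forall>j\<le>m. wX (Suc j) = wY (n - j)"
  shows "(\<Sum>k\<le>n. (-1)^k * of_nat (n choose k) * X k *
            (if n - k = 0 then 0 else of_nat (n - k) * (Y (n - k - 1) * wY (n - k)))
          + (-1)^k * of_nat (n choose k) *
            (if k = 0 then 0 else of_nat k * (X (k - 1) * wX k)) * Y (n - k)) = 0"
proof -
  let ?A = "\<lambda>k. (-1)^k * of_nat (n choose k) * X k *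
            (if n - k = 0 then 0 else of_nat (n - k) * (Y (n - k - 1) * wY (n - k)))"
  let ?B = "\<lambda>k. (-1)^k * of_nat (n choose k) *
            (if k = 0 then 0 else of_nat k * (X (k - 1) * wX k)) * Y (n - k)"
  have A: "sum ?A {..n} = (\<Sum>j\<le>m. ?A j)"
    unfolding n by (simp add: sum.atMost_Suc)
  have B0: "sum ?B {..Suc m} = ?B 0 + (\<Sum>j\<le>m. ?B (Suc j))"
    by (rule sum.atMost_Suc_shift)
  have B: "sum ?B {..n} = (\<Sum>j\<le>m. ?B (Suc j))"
    using B0 n by simp
  have t: "?A j + ?B (Suc j) = 0" if "j \<le> m" for j
  proof -
    have e1: "n - j \<noteq> 0" "n - Suc j = m - j" "n - j - 1 = m - j" using that n by auto
    have e2: "(of_nat (Suc j) :: complex) * of_nat (n choose Suc j) = of_nat (n - j) * of_nat (n choose j)"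
      unfolding n of_nat_mult[symmetric] binom_id by simp
    have e3: "wX (Suc j) = wY (n - j)" using w that by auto
    have b1: "?B (Suc j) = (-1)^(Suc j) * of_nat (n choose Suc j) * (of_nat (Suc j) * (X j * wX (Suc j))) * Y (m - j)"
      using e1 by simp
    have b2: "?B (Suc j) = - ((-1)^j * (of_nat (Suc j) * of_nat (n choose Suc j)) * X j * wX (Suc j) * Y (m - j))"
      unfolding b1 by (simp add: algebra_simps)
    have a1: "?A j = (-1)^j * of_nat (n choose j) * X j * (of_nat (n - j) * (Y (m - j) * wY (n - j)))"
      using e1 by simp
    have a2: "?A j = (-1)^j * (of_nat (n - j) * of_nat (n choose j)) * X j * wY (n - j) * Y (m - j)"
      unfolding a1 by (simp add: algebra_simps)
    have "?B (Suc j) = - ((-1)^j * (of_nat (n - j) * of_nat (n choose j)) * X j * wY (n - j) * Y (m - j))"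
      using b2 unfolding e2 e3 .
    then have BA: "?B (Suc j) = - ?A j" unfolding a2 .
    show ?thesis unfolding BA by simp
  qed
  have "(\<Sum>k\<le>n. ?A k + ?B k) = sum ?A {..n} + sum ?B {..n}" by (rule sum.distrib)
  also have "\<dots> = (\<Sum>j\<le>m. ?A j + ?B (Suc j))" unfolding A B by (rule sum.distrib[symmetric])
  also have "\<dots> = 0" by (rule sum.neutral) (use t in blast)
  finally show ?thesis .
qed

theorem theorem3:
  fixes \<Phi> :: "real \<Rightarrow> complex" and a b x0 x :: real and n :: nat
  assumes "continuous_on {a..b} \<Phi>"
    and "\<forall>t\<in>{a..b}. \<Phi> t \<noteq> 0"
    and "x0 \<in> {a..b}"
    and "even n" and "n \<ge> 2"
    and "x \<in> {a..b}"
  shows "(\<Sum>k=0..n. (-1)^k * of_nat (n choose k) * phi_pow \<Phi> x0 k x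
            * phi_pow_tilde \<Phi> x0 (n - k) x) = 0"
proof -
  note c = assms(1) and nz = assms(2) and x0 = assms(3)
  define \<psi> where "\<psi> = (\<lambda>t. inverse (\<Phi> t))"
  have c': "continuous_on {a..b} \<psi>" unfolding \<psi>_def using c nz by (intro continuous_intros) auto
  have nz': "\<forall>t\<in>{a..b}. \<psi> t \<noteq> 0" unfolding \<psi>_def using nz by auto
  have tl: "phi_pow_tilde \<Phi> x0 k = phi_pow \<psi> x0 k" for k
    unfolding phi_pow_tilde_def \<psi>_def by (rule ext) simp
  obtain m where n: "n = Suc m" using assms(5) by (cases n) auto
  define S where "S u = (\<Sum>k\<le>n. (-1)^k * of_nat (n choose k) * phi_pow \<Phi> x0 k u
            * phi_pow \<psi> x0 (n - k) u)" for u
  have w: "\<forall>j\<le>m. wt \<Phi> (Suc j) u = wt \<psi> (n - j) u" for u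
  proof (intro allI impI)
    fix j assume "j \<le> m"
    then have "even (Suc j) \<longleftrightarrow> \<not> even (n - j)" using assms(4) n by auto
    then show "wt \<Phi> (Suc j) u = wt \<psi> (n - j) u" unfolding wt_def \<psi>_def by auto
  qed
  have D: "(S has_vector_derivative 0) (at u within {a..b})" if u: "u \<in> {a..b}" for u
  proof -
    have "(S has_vector_derivative (\<Sum>k\<le>n. (-1)^k * of_nat (n choose k) * phi_pow \<Phi> x0 k u *
            (if n - k = 0 then 0 else of_nat (n - k) * (phi_pow \<psi> x0 (n - k - 1) u * wt \<psi> (n - k) u))
          + (-1)^k * of_nat (n choose k) *
            (if k = 0 then 0 else of_nat k * (phi_pow \<Phi> x0 (k - 1) u * wt \<Phi> k u)) * phi_pow \<psi> x0 (n - k) u))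
          (at u within {a..b})"
      unfolding S_def
      by (intro has_vector_derivative_sum has_vector_derivative_mult has_vector_derivative_mult_right
            phi_pow_deriv[OF c nz x0 u] phi_pow_deriv[OF c' nz' x0 u])
    also have "(\<Sum>k\<le>n. (-1)^k * of_nat (n choose k) * phi_pow \<Phi> x0 k u *
            (if n - k = 0 then 0 else of_nat (n - k) * (phi_pow \<psi> x0 (n - k - 1) u * wt \<psi> (n - k) u))
          + (-1)^k * of_nat (n choose k) *
            (if k = 0 then 0 else of_nat k * (phi_pow \<Phi> x0 (k - 1) u * wt \<Phi> k u)) * phi_pow \<psi> x0 (n - k) u) = 0"
      by (rule alg[OF n w])
    finally show ?thesis .
  qed
  obtain C where C: "\<And>u. u \<in> {a..b} \<Longrightarrow> S u = C"
    using has_vector_derivative_zero_constant[of "{a..b}" S] D by auto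
  have z: "phi_pow \<Phi> x0 k x0 * phi_pow \<psi> x0 (n - k) x0 = 0" for k
  proof (cases k)
    case 0 then show ?thesis using n phi_pow_at0[of \<psi> x0 m] by simp
  next
    case (Suc j) then show ?thesis using phi_pow_at0[of \<Phi> x0 j] by simp
  qed
  have "S x0 = 0" unfolding S_def
  proof (intro sum.neutral ballI)
    fix k assume "k \<in> {..n}"
    show "(-1)^k * of_nat (n choose k) * phi_pow \<Phi> x0 k x0 * phi_pow \<psi> x0 (n - k) x0 = 0"
      using z[of k] by (simp add: mult.assoc)
  qed
  then have "S x = 0" using C x0 assms(6) by metis
  then show ?thesis unfolding S_def tl atLeast0AtMost .
qed

end
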